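(* Let $n$ be a positive integer. Let $V_n\subseteq T_n$ be the set of triples $(A,B,C)\in T_n$ such that $C$ has at least one point strictly below the horizontal axis and either $B$ ends with an up step or $B$ is empty. Let $D_n^-\subseteq D_n$ be the set of pairs $(H,X)\in D_n$ in which $X$ is strictly below the horizontal axis. Define $t:V_n\to D_n^-$ as follows: for $(A,B,C)\in V_n$, let $K$ be the leftmost point of $C$ of minimal height, let $K$ cut $C$ into a left part $C_1$ and a right part $C_2$, and set $t(A,B,C)=(H,X)$, where $H$ is the concatenation of $C_1$, $A$, $B$, $C_2$ (in this order) and $X$ is the point of $H$ where $A$ ends and $B$ begins. Then $t$ is a bijection from $V_n$ onto $D_n^-$.
   Context: A lattice path here is a finite (possibly empty) sequence of steps, each an up step $(1,1)$ or a down step $(1,-1)$, drawn as a polygonal line from a given starting lattice point; its lattice points are its starting point and the endpoints of its steps; the height of a point is its vertical coordinate. $T_n$ is the set of ordered triples $(A,B,C)$ of lattice paths such that for some nonnegative integers $i,j,k$ with $i+j+k=n$, $A$ has $i$ up and $i$ down steps, $B$ has $j$ up and $j$ down steps, and $C$ has $k$ up and $k$ down steps; each of $A,B,C$ is regarded as drawn starting (and hence ending) on the horizontal axis, and statements about heights of points of $C$ or of $C$ being above/below the axis refer to this drawing. $D_n$ is the set of pairs $(H,X)$ where $H$ is a lattice path with $n$ up steps and $n$ down steps drawn from $(0,0)$ to $(2n,0)$ and $X$ is one of the $2n+1$ lattice points of $H$. Concatenation of paths means drawing them successively, each starting at the endpoint of the preceding one, the first starting at $(0,0)$. *)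

theory Defs
  imports Main
begin

text \<open>A lattice path is a list of steps: True = up step (1,1), False = down step (1,-1).
  The lattice points of a path p are indexed by k \<in> {0..length p}: point k is the
  endpoint of the first k steps (point 0 is the starting point).\<close>

type_synonym lpath = "bool list"

definition step_ht :: "bool \<Rightarrow> int" where
  "step_ht b = (if b then 1 else -1)"

definition ht :: "lpath \<Rightarrow> int" where
  "ht p = sum_list (map step_ht p)"

definition pt_ht :: "lpath \<Rightarrow> nat \<Rightarrow> int" where
  "pt_ht p k = ht (take k p)"

definition ups :: "lpath \<Rightarrow> nat" where
  "ups p = length (filter (\<lambda>b. b) p)"

definition downs :: "lpath \<Rightarrow> nat" where
  "downs p = length (filter (\<lambda>b. \<not> b) p)"

definition T :: "nat \<Rightarrow> (lpath \<times> lpath \<times> lpath) set" where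
  "T n = {(A, B, C). \<exists>i j k. i + j + k = n \<and>
            ups A = i \<and> downs A = i \<and> ups B = j \<and> downs B = j \<and> ups C = k \<and> downs C = k}"

definition V :: "nat \<Rightarrow> (lpath \<times> lpath \<times> lpath) set" where
  "V n = {(A, B, C). (A, B, C) \<in> T n \<and>
            (\<exists>k \<le> length C. pt_ht C k < 0) \<and> (B = [] \<or> last B)}"

definition D :: "nat \<Rightarrow> (lpath \<times> nat) set" where
  "D n = {(H, X). ups H = n \<and> downs H = n \<and> X \<le> length H}"

definition Dminus :: "nat \<Rightarrow> (lpath \<times> nat) set" where
  "Dminus n = {(H, X). (H, X) \<in> D n \<and> pt_ht H X < 0}"

definition min_ht :: "lpath \<Rightarrow> int" where
  "min_ht C = Min {pt_ht C k | k. k \<le> length C}"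

definition cut_pt :: "lpath \<Rightarrow> nat" where
  "cut_pt C = (LEAST k. k \<le> length C \<and> pt_ht C k = min_ht C)"

definition tmap :: "lpath \<times> lpath \<times> lpath \<Rightarrow> lpath \<times> nat" where
  "tmap = (\<lambda>(A, B, C). let m = cut_pt C in
            (take m C @ A @ B @ drop m C, m + length A))"

end

theory Submission imports Defs
begin

lemma ht_Nil[simp]: "ht [] = 0" by (simp add: ht_def)
lemma ht_Cons[simp]: "ht (b # p) = step_ht b + ht p" by (simp add: ht_def)
lemma ht_append[simp]: "ht (xs @ ys) = ht xs + ht ys" by (simp add: ht_def)
lemma ups_append[simp]: "ups (xs @ ys) = ups xs + ups ys" by (simp add: ups_def)
lemma downs_append[simp]: "downs (xs @ ys) = downs xs + downs ys" by (simp add: downs_def)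

lemma ht_ups_downs: "ht p = int (ups p) - int (downs p)"
  by (induction p) (auto simp: ups_def downs_def step_ht_def)

lemma pt_ht_0[simp]: "pt_ht p 0 = 0" by (simp add: pt_ht_def)
lemma pt_ht_min: "pt_ht p k = pt_ht p (min k (length p))"
  by (simp add: pt_ht_def min_def)
lemma pt_ht_len: "length p \<le> k \<Longrightarrow> pt_ht p k = ht p"
  by (simp add: pt_ht_def)
lemma pt_ht_Suc: "k < length p \<Longrightarrow> pt_ht p (Suc k) = pt_ht p k + step_ht (p ! k)"
  by (simp add: pt_ht_def take_Suc_conv_app_nth)
lemma pt_ht_app1: "k \<le> length xs \<Longrightarrow> pt_ht (xs @ ys) k = pt_ht xs k"
  by (simp add: pt_ht_def)
lemma pt_ht_app2: "length xs \<le> k \<Longrightarrow> pt_ht (xs @ ys) k = ht xs + pt_ht ys (k - length xs)"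
  by (simp add: pt_ht_def)
lemma pt_ht_drop: "pt_ht (drop a p) j = pt_ht p (a + j) - pt_ht p a"
  by (simp add: pt_ht_def take_add)
lemma pt_ht_take: "pt_ht (take b p) j = pt_ht p (min j b)"
  by (simp add: pt_ht_def min_def)
lemma ht_seg: "a \<le> b \<Longrightarrow> ht (drop a (take b p)) = pt_ht p b - pt_ht p a"
proof -
  assume "a \<le> b"
  have "take b p = take a p @ drop a (take b p)"
    using \<open>a \<le> b\<close> by (metis append_take_drop_id min.absorb1 take_take)
  hence "ht (take b p) = ht (take a p) + ht (drop a (take b p))" by (metis ht_append)
  thus ?thesis by (simp add: pt_ht_def)
qed
lemma ht_drop: "ht (drop e p) = ht p - pt_ht p e"
  by (metis add_diff_cancel_left' append_take_drop_id ht_append pt_ht_def)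

lemma step_bound: "k < length p \<Longrightarrow> pt_ht p (Suc k) = pt_ht p k + 1 \<or> pt_ht p (Suc k) = pt_ht p k - 1"
  by (simp add: pt_ht_Suc step_ht_def)

lemma ivt_up: "a \<le> b \<Longrightarrow> b \<le> length p \<Longrightarrow> pt_ht p a \<le> v \<Longrightarrow> v \<le> pt_ht p b \<Longrightarrow> \<exists>k. a \<le> k \<and> k \<le> b \<and> pt_ht p k = v"
proof (induction b)
  case 0 thus ?case by auto
next
  case (Suc b)
  show ?case
  proof (cases "a = Suc b")
    case True thus ?thesis using Suc by auto
  next
    case False
    hence ab: "a \<le> b" using Suc by auto
    show ?thesis
    proof (cases "v \<le> pt_ht p b")
      case True thus ?thesis using Suc ab by fastforce
    next
      case False
      thus ?thesis using step_bound[of b p] Suc by force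
    qed
  qed
qed

lemma ivt_down: "a \<le> b \<Longrightarrow> b \<le> length p \<Longrightarrow> v \<le> pt_ht p a \<Longrightarrow> pt_ht p b \<le> v \<Longrightarrow> \<exists>k. a \<le> k \<and> k \<le> b \<and> pt_ht p k = v"
proof (induction b)
  case 0 thus ?case by auto
next
  case (Suc b)
  show ?case
  proof (cases "a = Suc b")
    case True thus ?thesis using Suc by auto
  next
    case False
    hence ab: "a \<le> b" using Suc by auto
    show ?thesis
    proof (cases "pt_ht p b \<le> v")
      case True thus ?thesis using Suc ab by fastforce
    next
      case False
      thus ?thesis using step_bound[of b p] Suc by force
    qed
  qed
qed

lemma last_up: "B \<noteq> [] \<Longrightarrow> last B \<Longrightarrow> pt_ht B (length B - 1) = ht B - 1"
proof -
  assume "B \<noteq> []" "last B"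
  hence "B = butlast B @ [True]" by (metis append_butlast_last_id)
  hence "ht B = ht (butlast B) + 1" by (metis ht_append ht_Cons ht_Nil step_ht_def add.right_neutral)
  thus ?thesis by (simp add: pt_ht_def butlast_conv_take)
qed

lemma cut_pt_props:
  assumes "\<exists>k \<le> length C. pt_ht C k < 0"
  shows "cut_pt C \<le> length C" "pt_ht C (cut_pt C) = min_ht C" "min_ht C < 0"
    "\<And>k. min_ht C \<le> pt_ht C k" "\<And>k. k < cut_pt C \<Longrightarrow> min_ht C < pt_ht C k"
proof -
  let ?S = "{pt_ht C k | k. k \<le> length C}"
  have fin: "finite ?S" by simp
  have ne: "?S \<noteq> {}" by auto
  have "min_ht C \<in> ?S" unfolding min_ht_def using Min_in[OF fin ne] .
  then obtain k0 where k0: "k0 \<le> length C" "pt_ht C k0 = min_ht C" by auto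
  have L: "cut_pt C \<le> length C \<and> pt_ht C (cut_pt C) = min_ht C"
    unfolding cut_pt_def by (rule LeastI[of _ k0]) (use k0 in auto)
  thus "cut_pt C \<le> length C" "pt_ht C (cut_pt C) = min_ht C" by auto
  have le: "min_ht C \<le> pt_ht C k" if "k \<le> length C" for k
    unfolding min_ht_def using that by (intro Min_le[OF fin]) auto
  show ge: "min_ht C \<le> pt_ht C k" for k
    using le[of "min k (length C)"] pt_ht_min[of C k] by simp
  from assms obtain k1 where "k1 \<le> length C" "pt_ht C k1 < 0" by auto
  thus "min_ht C < 0" using le[of k1] by simp
  show "min_ht C < pt_ht C k" if "k < cut_pt C" for k
  proof -
    have "\<not> (k \<le> length C \<and> pt_ht C k = min_ht C)"
      using not_less_Least[OF that[unfolded cut_pt_def]] unfolding cut_pt_def .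
    thus ?thesis using ge[of k] that L by auto
  qed
qed

lemma cut_pt_char:
  assumes "m \<le> length C" "\<And>k. pt_ht C m \<le> pt_ht C k" "\<And>k. k < m \<Longrightarrow> pt_ht C m < pt_ht C k"
  shows "min_ht C = pt_ht C m" "cut_pt C = m"
proof -
  show mh: "min_ht C = pt_ht C m"
    unfolding min_ht_def by (rule Min_eqI) (use assms in auto)
  show "cut_pt C = m"
    unfolding cut_pt_def mh
  proof (rule Least_equality)
    show "m \<le> length C \<and> pt_ht C m = pt_ht C m" using assms by simp
  next
    fix y assume "y \<le> length C \<and> pt_ht C y = pt_ht C m"
    thus "m \<le> y" using assms(3)[of y] by (cases "y < m") auto
  qed
qed

definition ginv :: "lpath \<times> nat \<Rightarrow> lpath \<times> lpath \<times> lpath" where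
  "ginv = (\<lambda>(H, X). let h = pt_ht H X; m = (LEAST k. pt_ht H k = h);
     e = (if \<exists>k. X \<le> k \<and> k \<le> length H \<and> pt_ht H k = h - 1
          then Suc (GREATEST k. X \<le> k \<and> k \<le> length H \<and> pt_ht H k = h - 1) else X)
     in (drop m (take X H), drop X (take e H), take m H @ drop e H))"

lemma ginv_char:
  assumes hX: "pt_ht H X = h" and hm: "pt_ht H m = h" and lm: "\<And>k. k < m \<Longrightarrow> pt_ht H k \<noteq> h"
    and Xe: "X \<le> e" and eL: "e \<le> length H"
    and disj: "(e = X \<and> (\<forall>k. X \<le> k \<and> k \<le> length H \<longrightarrow> pt_ht H k \<noteq> h - 1)) \<or>
       (X < e \<and> pt_ht H (e - 1) = h - 1 \<and> (\<forall>k. e \<le> k \<and> k \<le> length H \<longrightarrow> pt_ht H k \<noteq> h - 1))"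
  shows "ginv (H, X) = (drop m (take X H), drop X (take e H), take m H @ drop e H)"
proof -
  have M: "(LEAST k. pt_ht H k = h) = m"
  proof (rule Least_equality)
    show "pt_ht H m = h" by (rule hm)
  next
    fix y assume "pt_ht H y = h" thus "m \<le> y" using lm[of y] by (cases "y < m") auto
  qed
  have E: "(if \<exists>k. X \<le> k \<and> k \<le> length H \<and> pt_ht H k = h - 1
          then Suc (GREATEST k. X \<le> k \<and> k \<le> length H \<and> pt_ht H k = h - 1) else X) = e"
  proof (cases "e = X \<and> (\<forall>k. X \<le> k \<and> k \<le> length H \<longrightarrow> pt_ht H k \<noteq> h - 1)")
    case True thus ?thesis by auto
  next
    case False
    with disj have d: "X < e" "pt_ht H (e - 1) = h - 1" "\<forall>k. e \<le> k \<and> k \<le> length H \<longrightarrow> pt_ht H k \<noteq> h - 1"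
      by auto
    have G: "(GREATEST k. X \<le> k \<and> k \<le> length H \<and> pt_ht H k = h - 1) = e - 1"
    proof (rule Greatest_equality)
      show "X \<le> e - 1 \<and> e - 1 \<le> length H \<and> pt_ht H (e - 1) = h - 1" using d eL by auto
    next
      fix y assume "X \<le> y \<and> y \<le> length H \<and> pt_ht H y = h - 1"
      thus "y \<le> e - 1" using d(3) by (cases "e \<le> y") auto
    qed
    have "\<exists>k. X \<le> k \<and> k \<le> length H \<and> pt_ht H k = h - 1"
      using d eL by (intro exI[of _ "e - 1"]) auto
    thus ?thesis using G d by auto
  qed
  show ?thesis unfolding ginv_def Let_def case_prod_conv hX M E ..
qed

lemma part1:
  assumes "(A, B, C) \<in> V n"
  shows "tmap (A, B, C) \<in> Dminus n \<and> ginv (tmap (A, B, C)) = (A, B, C)"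
proof -
  from assms obtain i j k where ijk: "i + j + k = n" "ups A = i" "downs A = i" "ups B = j" "downs B = j"
     "ups C = k" "downs C = k" and neg: "\<exists>k \<le> length C. pt_ht C k < 0" and Bl: "B = [] \<or> last B"
    unfolding V_def T_def by auto
  have hA: "ht A = 0" "ht B = 0" "ht C = 0" using ijk by (simp_all add: ht_ups_downs)
  define m where "m = cut_pt C"
  define \<mu> where "\<mu> = min_ht C"
  note cp = cut_pt_props[OF neg, folded m_def \<mu>_def]
  define L where "L = take m C"
  define R where "R = drop m C"
  have CLR: "C = L @ R" unfolding L_def R_def by simp
  have lL: "length L = m" using cp(1) unfolding L_def by simp
  have htL: "ht L = \<mu>" using cp(2) unfolding L_def pt_ht_def by simp
  define H where "H = L @ A @ B @ R"
  define X where "X = m + length A"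
  define e where "e = X + length B"
  have tm: "tmap (A, B, C) = (H, X)" unfolding tmap_def H_def X_def L_def R_def m_def by (simp add: Let_def)
  have lenH: "length H = m + length A + length B + length R" unfolding H_def using lL by simp
  have hX: "pt_ht H X = \<mu>"
    unfolding H_def X_def using pt_ht_app2[of "L @ A" X "B @ R"] lL htL hA
    by (simp add: pt_ht_app1 pt_ht_def)
  have hm: "pt_ht H m = \<mu>" unfolding H_def using lL htL by (simp add: pt_ht_app1 pt_ht_def)
  have hlt: "pt_ht H k \<noteq> \<mu>" if "k < m" for k
  proof -
    have "pt_ht H k = pt_ht C k" unfolding H_def CLR using that lL by (simp add: pt_ht_app1)
    thus ?thesis using cp(5)[OF that] by simp
  qed
  have after: "pt_ht H k = pt_ht C (m + (k - e))" if "e \<le> k" for k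
  proof -
    have "pt_ht H k = ht (L @ A @ B) + pt_ht R (k - e)"
      using pt_ht_app2[of "L @ A @ B" k R] that lL unfolding H_def e_def X_def by (simp add: add.assoc)
    also have "\<dots> = \<mu> + (pt_ht C (m + (k - e)) - \<mu>)"
      unfolding R_def pt_ht_drop using htL hA cp(2) by simp
    finally show ?thesis by simp
  qed
  have afterge: "pt_ht H k \<noteq> \<mu> - 1" if "e \<le> k" for k
    using after[OF that] cp(4)[of "m + (k - e)"] by simp
  have disj: "(e = X \<and> (\<forall>k. X \<le> k \<and> k \<le> length H \<longrightarrow> pt_ht H k \<noteq> \<mu> - 1)) \<or>
       (X < e \<and> pt_ht H (e - 1) = \<mu> - 1 \<and> (\<forall>k. e \<le> k \<and> k \<le> length H \<longrightarrow> pt_ht H k \<noteq> \<mu> - 1))"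
  proof (cases "B = []")
    case True
    thus ?thesis using afterge unfolding e_def by auto
  next
    case False
    with Bl have lB: "last B" by simp
    have "pt_ht H (e - 1) = ht (L @ A) + pt_ht (B @ R) (length B - 1)"
      proof -
      have "0 < length B" using False by simp
      hence le: "length (L @ A) \<le> e - 1" and eq: "e - 1 - length (L @ A) = length B - 1"
        using lL unfolding e_def X_def by (auto simp del: length_greater_0_conv)
      show ?thesis using pt_ht_app2[OF le, of "B @ R"] eq unfolding H_def by simp
    qed
    also have "\<dots> = \<mu> - 1" using last_up[OF False lB] hA htL False
      by (simp add: pt_ht_app1)
    finally show ?thesis using afterge False unfolding e_def by auto
  qed
  have G: "ginv (H, X) = (drop m (take X H), drop X (take e H), take m H @ drop e H)"
    by (rule ginv_char[OF hX hm hlt _ _ disj]) (auto simp: e_def lenH X_def)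
  have "ginv (H, X) = (A, B, C)"
    unfolding G unfolding H_def X_def e_def CLR using lL by simp
  moreover have "(H, X) \<in> Dminus n"
    unfolding Dminus_def D_def using hX cp(3) ijk lenH unfolding H_def X_def
    using CLR by auto
  ultimately show ?thesis using tm by simp
qed

lemma part2:
  assumes "(H, X) \<in> Dminus n"
  shows "ginv (H, X) \<in> V n \<and> tmap (ginv (H, X)) = (H, X)"
proof -
  define h where "h = pt_ht H X"
  from assms have ud: "ups H = n" "downs H = n" and XL: "X \<le> length H" and hneg: "h < 0"
    unfolding Dminus_def D_def h_def by auto
  have htH: "ht H = 0" using ud by (simp add: ht_ups_downs)
  define m where "m = (LEAST k. pt_ht H k = h)"
  have hm: "pt_ht H m = h" unfolding m_def by (rule LeastI[of _ X]) (simp add: h_def)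
  have mX: "m \<le> X" unfolding m_def by (rule Least_le) (simp add: h_def)
  have lm: "pt_ht H k \<noteq> h" if "k < m" for k using not_less_Least[OF that[unfolded m_def]] m_def by simp
  have lmgt: "h < pt_ht H k" if km: "k < m" for k
  proof (rule ccontr)
    assume "\<not> h < pt_ht H k"
    then obtain k' where "0 \<le> k'" "k' \<le> k" "pt_ht H k' = h"
      using ivt_down[of 0 k H h] km mX XL hneg by auto
    thus False using lm[of k'] km by auto
  qed
  obtain e where Xe: "X \<le> e" and eL: "e \<le> length H" and he: "pt_ht H e = h"
    and ege: "\<And>k. e \<le> k \<Longrightarrow> h \<le> pt_ht H k"
    and disj: "(e = X \<and> (\<forall>k. X \<le> k \<and> k \<le> length H \<longrightarrow> pt_ht H k \<noteq> h - 1)) \<or>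
       (X < e \<and> pt_ht H (e - 1) = h - 1 \<and> (\<forall>k. e \<le> k \<and> k \<le> length H \<longrightarrow> pt_ht H k \<noteq> h - 1))"
    and elast: "X < e \<Longrightarrow> H ! (e - 1)"
  proof (cases "\<exists>k. X \<le> k \<and> k \<le> length H \<and> pt_ht H k = h - 1")
    case False
    have ge: "h \<le> pt_ht H k" if Xk: "X \<le> k" for k
    proof (rule ccontr)
      assume a: "\<not> h \<le> pt_ht H k"
      have "pt_ht H (min k (length H)) \<le> h - 1" using a pt_ht_min[of H k] by linarith
      then obtain k' where "X \<le> k'" "k' \<le> min k (length H)" "pt_ht H k' = h - 1"
        using ivt_down[of X "min k (length H)" H "h - 1"] Xk XL h_def by auto
      thus False using False by auto
    qed
    show ?thesis
      by (rule that[of X]) (use XL h_def False ge in auto)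
  next
    case True
    define P where "P = (\<lambda>k. X \<le> k \<and> k \<le> length H \<and> pt_ht H k = h - 1)"
    define K where "K = (GREATEST k. P k)"
    obtain k0 where k0: "P k0" using True unfolding P_def by blast
    have bnd: "\<And>y. P y \<Longrightarrow> y \<le> length H" unfolding P_def by blast
    have PK: "P K" unfolding K_def by (rule GreatestI_nat[of P k0 "length H", OF k0 bnd])
    have Kmax: "\<And>k. P k \<Longrightarrow> k \<le> K" unfolding K_def by (rule Greatest_le_nat[of P _ "length H", OF _ bnd])
    have PK': "X \<le> K" "K \<le> length H" "pt_ht H K = h - 1" using PK unfolding P_def by blast+
    have KL: "K < length H"
    proof (rule ccontr)
      assume "\<not> K < length H"
      hence "pt_ht H K = ht H" by (intro pt_ht_len) simp
      thus False using PK'(3) htH hneg by simp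
    qed
    have ge: "h \<le> pt_ht H k" if Kk: "K < k" for k
    proof (rule ccontr)
      assume a: "\<not> h \<le> pt_ht H k"
      have "pt_ht H (min k (length H)) \<le> h - 1" using a pt_ht_min[of H k] by linarith
      moreover have "h - 1 \<le> pt_ht H (length H)" using htH hneg pt_ht_len[of H "length H"] by simp
      ultimately obtain k' where "min k (length H) \<le> k'" "k' \<le> length H" "pt_ht H k' = h - 1"
        using ivt_up[of "min k (length H)" "length H" H "h - 1"] by auto
      hence "P k'" using PK' Kk KL unfolding P_def by auto
      hence "k' \<le> K" by (rule Kmax)
      thus False using \<open>min k (length H) \<le> k'\<close> Kk KL by auto
    qed
    have hK1: "pt_ht H (Suc K) = h" using step_bound[OF KL] ge[of "Suc K"] PK'(3) by auto
    have HK: "H ! K"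
    proof (rule ccontr)
      assume "\<not> H ! K"
      hence "pt_ht H (Suc K) = pt_ht H K - 1" using pt_ht_Suc[OF KL] by (simp add: step_ht_def)
      thus False using hK1 PK'(3) by simp
    qed
    show ?thesis
    proof (rule that[of "Suc K"])
      show "X \<le> Suc K" "Suc K \<le> length H" "pt_ht H (Suc K) = h" using PK' KL hK1 by auto
      show "h \<le> pt_ht H k" if "Suc K \<le> k" for k using ge that by simp
      show "X < Suc K \<Longrightarrow> H ! (Suc K - 1)" using HK by simp
      show "(Suc K = X \<and> (\<forall>k. X \<le> k \<and> k \<le> length H \<longrightarrow> pt_ht H k \<noteq> h - 1)) \<or>
       (X < Suc K \<and> pt_ht H (Suc K - 1) = h - 1 \<and> (\<forall>k. Suc K \<le> k \<and> k \<le> length H \<longrightarrow> pt_ht H k \<noteq> h - 1))"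
      proof (rule disjI2, intro conjI allI impI)
        show "X < Suc K" using PK' by simp
        show "pt_ht H (Suc K - 1) = h - 1" using PK' by simp
        fix k assume "Suc K \<le> k \<and> k \<le> length H"
        hence "h \<le> pt_ht H k" using ge by simp
        thus "pt_ht H k \<noteq> h - 1" by simp
      qed
    qed
  qed
  have G: "ginv (H, X) = (drop m (take X H), drop X (take e H), take m H @ drop e H)"
    by (rule ginv_char[OF h_def[symmetric] hm lm Xe eL disj])
  define A where "A = drop m (take X H)"
  define B where "B = drop X (take e H)"
  define L where "L = take m H"
  define R where "R = drop e H"
  define C where "C = L @ R"
  have HS: "H = L @ A @ B @ R" unfolding L_def A_def B_def R_def using mX Xe
    by (metis append.assoc append_take_drop_id min.absorb1 take_take)
  have lL: "length L = m" using mX XL unfolding L_def by simp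
  have lA: "length A = X - m" using XL unfolding A_def by simp
  have hA: "ht A = 0" unfolding A_def using ht_seg[OF mX] hm h_def by simp
  have hB: "ht B = 0" unfolding B_def using ht_seg[OF Xe] he h_def by simp
  have hL: "ht L = h" using hm unfolding L_def pt_ht_def by simp
  have hR: "ht R = - h" using htH he unfolding R_def ht_drop by simp
  have hC: "ht C = 0" unfolding C_def using hL hR by simp
  have Cle: "pt_ht C k = pt_ht H k" if "k \<le> m" for k
    unfolding C_def L_def using that mX XL by (simp add: pt_ht_app1 pt_ht_take min_def)
  have Cge: "pt_ht C k = pt_ht H (e + (k - m))" if "m \<le> k" for k
    unfolding C_def using pt_ht_app2[of L k R] that lL hL he unfolding R_def pt_ht_drop by simp
  have Cm: "pt_ht C m = h" using Cle[of m] hm by simp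
  have cm: "cut_pt C = m"
  proof (rule cut_pt_char(2))
    show "m \<le> length C" unfolding C_def using lL by simp
    show "pt_ht C m \<le> pt_ht C k" for k
    proof (cases "k \<le> m")
      case True thus ?thesis using Cle[of k] Cm lmgt[of k] by (cases "k = m") auto
    next
      case False thus ?thesis using Cge[of k] Cm ege[of "e + (k - m)"] by simp
    qed
    show "pt_ht C m < pt_ht C k" if "k < m" for k using Cle[of k] Cm lmgt[OF that] that by simp
  qed
  have ABeq: "ups A = downs A" "ups B = downs B" "ups C = downs C"
    using hA hB hC by (simp_all add: ht_ups_downs)
  have sumn: "ups A + ups B + ups C = n" using ud(1) unfolding HS C_def by simp
  have Blast: "B = [] \<or> last B"
  proof (cases "X < e")
    case False thus ?thesis using Xe unfolding B_def by simp
  next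
    case True
    have "B \<noteq> []" using True eL unfolding B_def by simp
    moreover have "last B = H ! (e - 1)" unfolding B_def using True eL
      by (simp add: last_conv_nth)
    ultimately show ?thesis using elast[OF True] by simp
  qed
  have inV: "(A, B, C) \<in> V n"
    unfolding V_def T_def using ABeq sumn Blast Cm hneg lL
    by (auto intro!: exI[of _ m] simp: C_def)
  have "tmap (A, B, C) = (H, X)"
    unfolding tmap_def using cm HS lL lA mX by (simp add: Let_def C_def)
  thus ?thesis using inV G unfolding A_def B_def C_def L_def R_def by simp
qed

theorem lemma3:
  fixes n :: nat
  assumes "0 < n"
  shows "bij_betw tmap (V n) (Dminus n)"
proof (rule bij_betw_byWitness[where f' = ginv])
  show "tmap ` V n \<subseteq> Dminus n" using part1 by force
  show "ginv ` Dminus n \<subseteq> V n" using part2 by force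
  show "\<forall>x\<in>V n. ginv (tmap x) = x" using part1 by force
  show "\<forall>y\<in>Dminus n. tmap (ginv y) = y" using part2 by force
qed

end
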